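(* Let $p,d\in C^{2}([0,\infty),\mathbb{R})$, $b\in C^2([0,\infty),\mathbb{C})$, $c\in C^1([0,\infty),\mathbb{C})$, $q\in C([0,\infty),\mathbb{R})$ with $p>0$ on $[0,\infty)$, and assume: (B1) the (possibly improper) limit $d_\infty:=\lim_{t\to\infty}d(t)\in\mathbb{R}\cup\{\pm\infty\}$ exists; (B2) there are constants $\beta,\gamma>0$ with $|b(t)|\le\beta(|d(t)|+1)$ and $|c(t)|\le\gamma(|d(t)|+1)$ for all $t\ge0$; (B3a) for some $\lambda\in\mathbb{R}\setminus\{d_\infty\}$ there is $t_\lambda\ge0$ with $\lambda\notin d([t_\lambda,\infty))$ and $\pi(\cdot,\lambda)$ bounded on $[t_\lambda,\infty)$; (B3b) for every $\lambda\in\mathbb{R}\setminus(\overline{\Delta([0,\infty))}\cup\{d_\infty\})$ there is $t_\lambda\ge0$ with $\lambda\notin d([t_\lambda,\infty))$ and $\rho(\cdot,\lambda)$, $\kappa(\cdot,\lambda)$, $1/\pi(\cdot,\lambda)$ bounded on $[t_\lambda,\infty)$; (C) for every $\lambda\in\mathbb{R}\setminus(\overline{\Delta([0,\infty))}\cup\{d_\infty\})$ the limits $\lim_{t\to\infty}\frac{\rho(t,\lambda)}{\pi(t,\lambda)}$ and $\lim_{t\to\infty}\frac{\kappa(t,\lambda)}{\pi(t,\lambda)}$ exist and are finite. Then for every $\lambda\in\mathbb{R}\setminus(\overline{\Delta([0,\infty))}\cup\{d_\infty\})$ the limits below exist, are finite and satisfy $$\lim_{t\to\infty}\frac{\frac{\partial}{\partial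 t}\pi(t,\lambda)}{\pi(t,\lambda)}=0,\qquad \lim_{t\to\infty}\frac{\rho(t,\lambda)}{\pi(t,\lambda)}\in\mathbb{R},\qquad \lim_{t\to\infty}\frac{\kappa(t,\lambda)}{\pi(t,\lambda)}\in\mathbb{R}.$$
   Context: Notation: $\Delta(t):=d(t)-|b(t)|^2/p(t)$. For $t$ with $d(t)\ne\lambda$: $\pi(t,\lambda):=p(t)-\frac{|b(t)|^2}{d(t)-\lambda}$, $\rho(t,\lambda):=-\frac{2\operatorname{Im}(b(t)\overline{c(t)})}{d(t)-\lambda}+i\frac{\partial}{\partial t}\pi(t,\lambda)$, $\kappa(t,\lambda):=q(t)-\lambda-\frac{|c(t)|^2}{d(t)-\lambda}+\frac{\partial}{\partial t}\Big(\frac{\overline{b(t)}c(t)}{d(t)-\lambda}\Big)$. The overline on a set denotes closure in $\mathbb{R}$. *)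

theory Defs
  imports "HOL-Analysis.Analysis"
begin

text \<open>f is k times continuously differentiable on S (one-sided derivatives at
boundary points of S, via derivatives within S).\<close>
definition Ck_on :: "nat \<Rightarrow> real set \<Rightarrow> (real \<Rightarrow> 'a::real_normed_vector) \<Rightarrow> bool" where
  "Ck_on k S f \<longleftrightarrow> (\<exists>D :: nat \<Rightarrow> real \<Rightarrow> 'a. D 0 = f \<and>
      (\<forall>j<k. \<forall>t\<in>S. (D j has_vector_derivative D (Suc j) t) (at t within S)) \<and>
      (\<forall>j\<le>k. continuous_on S (D j)))"

definition Delta_f :: "(real \<Rightarrow> real) \<Rightarrow> (real \<Rightarrow> complex) \<Rightarrow> (real \<Rightarrow> real) \<Rightarrow> real \<Rightarrow> real" where
  "Delta_f p b d t = d t - (cmod (b t))\<^sup>2 / p t"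

definition pi_f :: "(real \<Rightarrow> real) \<Rightarrow> (real \<Rightarrow> complex) \<Rightarrow> (real \<Rightarrow> real) \<Rightarrow> real \<Rightarrow> real \<Rightarrow> real" where
  "pi_f p b d t l = p t - (cmod (b t))\<^sup>2 / (d t - l)"

definition rho_f :: "(real \<Rightarrow> real) \<Rightarrow> (real \<Rightarrow> complex) \<Rightarrow> (real \<Rightarrow> complex) \<Rightarrow> (real \<Rightarrow> real)
    \<Rightarrow> real \<Rightarrow> real \<Rightarrow> complex" where
  "rho_f p b c d t l = complex_of_real (- 2 * Im (b t * cnj (c t)) / (d t - l))
      + \<i> * complex_of_real (vector_derivative (\<lambda>s. pi_f p b d s l) (at t))"

definition kappa_f :: "(real \<Rightarrow> complex) \<Rightarrow> (real \<Rightarrow> complex) \<Rightarrow> (real \<Rightarrow> real) \<Rightarrow> (real \<Rightarrow> real)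
    \<Rightarrow> real \<Rightarrow> real \<Rightarrow> complex" where
  "kappa_f b c d q t l = complex_of_real (q t - l - (cmod (c t))\<^sup>2 / (d t - l))
      + vector_derivative (\<lambda>s. cnj (b s) * c s / complex_of_real (d s - l)) (at t)"

end

theory Submission
  imports Defs
begin


lemma unb_incr:
  fixes f f' :: "real \<Rightarrow> real"
  assumes d: "\<forall>t\<ge>T. (f has_real_derivative f' t) (at t)"
    and k: "\<forall>t\<ge>T. f' t \<ge> k" and kp: "k > 0"
  shows "\<not> bounded (f ` {T..})"
proof
  assume "bounded (f ` {T..})"
  then obtain M where M: "\<forall>t\<ge>T. \<bar>f t\<bar> \<le> M"
    by (auto simp: bounded_iff)
  define x where "x = T + (2*M + 1)/k"
  have M0: "M \<ge> 0" using M[rule_format, of T] by simp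
  have xT: "T < x" using M0 kp by (simp add: x_def)
  obtain z where z: "T < z" "z < x" "f x - f T = (x - T) * f' z"
    using MVT2[OF xT, of f f'] d by auto
  have "(x - T) * f' z \<ge> (x - T) * k" using k z xT by (intro mult_left_mono) auto
  also have "(x - T) * k = 2*M+1" using kp by (simp add: x_def)
  finally have "f x - f T \<ge> 2*M+1" using z by simp
  moreover have "\<bar>f x\<bar> \<le> M" "\<bar>f T\<bar> \<le> M" using M xT by auto
  ultimately show False by linarith
qed

lemma unb_sign:
  fixes P g g' r :: "real \<Rightarrow> real"
  assumes dP: "\<forall>t\<ge>T. P differentiable (at t)"
    and dg: "\<forall>t\<ge>T. (g has_real_derivative g' t) (at t)"
    and Pnz: "\<forall>t\<ge>T. \<bar>P t\<bar> \<ge> c" and cp: "c > 0"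
    and gr: "\<forall>t\<ge>T. g' t = r t * P t"
    and r: "\<forall>t\<ge>T. r t \<ge> m" and mp: "m > 0"
  shows "\<not> bounded (g ` {T..})"
proof -
  have cont: "continuous_on {T..} P"
    using dP by (intro continuous_at_imp_continuous_on) (auto intro: differentiable_imp_continuous_within)
  have nz: "\<forall>t\<ge>T. P t \<noteq> 0" using Pnz cp by force
  show ?thesis
  proof (cases "P T > 0")
    case True
    have pos: "\<forall>t\<ge>T. P t > 0"
    proof (intro allI impI, rule ccontr)
      fix t assume t: "T \<le> t" "\<not> 0 < P t"
      then have "P t \<le> 0" by simp
      then obtain x where "x \<ge> T" "x \<le> t" "P x = 0"
        using IVT2'[of P t 0 T] True t cont continuous_on_subset[OF cont, of "{T..t}"] by auto
      thus False using nz by auto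
    qed
    show ?thesis
    proof (rule unb_incr[OF dg _ _])
      show "\<forall>t\<ge>T. g' t \<ge> m * c"
      proof (intro allI impI)
        fix t assume t: "T \<le> t"
        have "P t \<ge> c" using Pnz[rule_format,OF t] pos[rule_format,OF t] by simp
        have "m * c \<le> r t * P t" using r \<open>P t \<ge> c\<close> t mp cp
          by (intro mult_mono) auto
        thus "g' t \<ge> m * c" using gr t by simp
      qed
    qed (use mp cp in simp)
  next
    case False
    then have PT: "P T < 0" using nz by force
    have neg: "\<forall>t\<ge>T. P t < 0"
    proof (intro allI impI, rule ccontr)
      fix t assume t: "T \<le> t" "\<not> P t < 0"
      then have "P t \<ge> 0" by simp
      then obtain x where "x \<ge> T" "x \<le> t" "P x = 0"
        using IVT'[of P T 0 t] PT t continuous_on_subset[OF cont, of "{T..t}"] by auto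
      thus False using nz by auto
    qed
    have "\<not> bounded ((\<lambda>t. - g t) ` {T..})"
    proof (rule unb_incr[of T _ "\<lambda>t. - g' t"])
      show "\<forall>t\<ge>T. ((\<lambda>t. - g t) has_real_derivative - g' t) (at t)"
        using dg by (auto intro: derivative_intros)
      show "\<forall>t\<ge>T. - g' t \<ge> m * c"
      proof (intro allI impI)
        fix t assume t: "T \<le> t"
        have "- P t \<ge> c" using Pnz[rule_format,OF t] neg[rule_format,OF t] by simp
        have "m * c \<le> r t * (- P t)" using r \<open>- P t \<ge> c\<close> t mp cp
          by (intro mult_mono) auto
        thus "- g' t \<ge> m * c" using gr t by simp
      qed
    qed (use mp cp in simp)
    then show ?thesis by simp
  qed
qed

lemma lim_zero:
  fixes P g g' :: "real \<Rightarrow> real"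
  assumes dP: "\<forall>t\<ge>T. P differentiable (at t)"
    and dg: "\<forall>t\<ge>T. (g has_real_derivative g' t) (at t)"
    and B: "\<forall>t\<ge>T. \<bar>1 / P t\<bar> \<le> B"
    and lim: "((\<lambda>t. g' t / P t) \<longlongrightarrow> a) at_top"
    and gb: "bounded (g ` {T..}) \<or> (g = P \<and> bounded (g' ` {T..}))"
  shows "a = 0"
proof (rule ccontr)
  assume a: "a \<noteq> 0"
  then have "\<bar>a\<bar>/2 > 0" by simp
  from tendstoD[OF lim this] obtain T1 where T1: "\<forall>t\<ge>T1. dist (g' t / P t) a < \<bar>a\<bar>/2"
    by (auto simp: eventually_at_top_linorder)
  define T' where "T' = max T T1"
  have close: "\<bar>g' t / P t - a\<bar> < \<bar>a\<bar>/2" if "t \<ge> T'" for t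
    using T1 that by (auto simp: T'_def dist_real_def)
  have Pnz: "P t \<noteq> 0" if "t \<ge> T'" for t
    using close[OF that] by auto
  have Bp: "B > 0"
  proof -
    have "\<bar>1 / P T'\<bar> \<le> B" using B by (auto simp: T'_def)
    moreover have "\<bar>1 / P T'\<bar> > 0" using Pnz[of T'] by simp
    ultimately show ?thesis by linarith
  qed
  have Plow: "\<bar>P t\<bar> \<ge> 1/B" if "t \<ge> T'" for t
  proof -
    have "1/\<bar>P t\<bar> \<le> B" using B that by (auto simp: T'_def)
    thus ?thesis using Pnz[OF that] Bp by (simp add: field_simps)
  qed
  have gb': "bounded (g ` {T'..})"
    using gb
  proof
    assume "bounded (g ` {T..})"
    thus ?thesis by (rule bounded_subset) (auto simp: T'_def)
  next
    assume h: "g = P \<and> bounded (g' ` {T..})"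
    then obtain M where M: "\<forall>t\<ge>T. \<bar>g' t\<bar> \<le> M" by (auto simp: bounded_iff)
    have "\<bar>g t\<bar> \<le> 2*M/\<bar>a\<bar>" if t: "t \<ge> T'" for t
    proof -
      have q: "\<bar>g' t / P t\<bar> \<ge> \<bar>a\<bar>/2" using close[OF t] by linarith
      have "\<bar>g' t\<bar> = \<bar>g' t / P t\<bar> * \<bar>P t\<bar>" using Pnz[OF t] by (simp add: abs_mult)
      also have "\<dots> \<ge> \<bar>a\<bar>/2 * \<bar>P t\<bar>" using q by (intro mult_right_mono) auto
      finally have "\<bar>a\<bar>/2 * \<bar>g t\<bar> \<le> M" using M t h by (auto simp: T'_def)
      thus ?thesis using a by (simp add: field_simps)
    qed
    thus ?thesis by (auto simp: bounded_iff)
  qed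
  have dP': "\<forall>t\<ge>T'. P differentiable (at t)" using dP by (auto simp: T'_def)
  have Plow': "\<forall>t\<ge>T'. \<bar>P t\<bar> \<ge> 1/B" using Plow by auto
  have gr: "\<forall>t\<ge>T'. g' t = (g' t / P t) * P t" using Pnz by auto
  show False
  proof (cases "a > 0")
    case True
    have "\<not> bounded (g ` {T'..})"
    proof (rule unb_sign[OF dP' _ Plow' _ gr])
      show "\<forall>t\<ge>T'. (g has_real_derivative g' t) (at t)" using dg by (auto simp: T'_def)
      show "\<forall>t\<ge>T'. g' t / P t \<ge> a/2"
      proof (intro allI impI)
        fix t assume "T' \<le> t"
        from close[OF this] True show "g' t / P t \<ge> a/2" by linarith
      qed
    qed (use Bp True in auto)
    thus False using gb' by simp
  next
    case False
    have "\<not> bounded ((\<lambda>t. - g t) ` {T'..})"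
    proof (rule unb_sign[OF dP' _ Plow', of _ "\<lambda>t. - g' t" "\<lambda>t. - (g' t / P t)" "-a/2"])
      show "\<forall>t\<ge>T'. ((\<lambda>t. - g t) has_real_derivative - g' t) (at t)"
        using dg by (auto simp: T'_def intro: derivative_intros)
      show "\<forall>t\<ge>T'. - (g' t / P t) \<ge> -a/2"
      proof (intro allI impI)
        fix t assume "T' \<le> t"
        from close[OF this] False show "- (g' t / P t) \<ge> -a/2" by linarith
      qed
      show "\<forall>t\<ge>T'. - g' t = - (g' t / P t) * P t" using gr by auto
    qed (use Bp False a in auto)
    thus False using gb' by simp
  qed
qed

lemma Ck_diff:
  fixes f :: "real \<Rightarrow> 'a::real_normed_vector"
  assumes "Ck_on k {0..} f" "k \<ge> 1" "t > 0"
  shows "f differentiable (at t)"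
proof -
  obtain D where D: "D 0 = f" "\<forall>j<k. \<forall>t\<in>{0..}. (D j has_vector_derivative D (Suc j) t) (at t within {0..})"
    using assms(1) unfolding Ck_on_def by blast
  have "(f has_vector_derivative D 1 t) (at t within {0..})"
    using D assms(2,3) by (metis One_nat_def atLeast_iff less_eq_real_def less_le_trans zero_less_one le_less_trans less_le_not_le)
  moreover have "at t within {0..} = at t"
    using assms(3) by (intro at_within_interior) auto
  ultimately show ?thesis
    unfolding differentiable_def has_vector_derivative_def by auto
qed



theorem lemma4p2:
  fixes p d q :: "real \<Rightarrow> real" and b c :: "real \<Rightarrow> complex" and dinf :: ereal
  assumes p_C2: "Ck_on 2 {0..} p" and d_C2: "Ck_on 2 {0..} d"
    and b_C2: "Ck_on 2 {0..} b" and c_C1: "Ck_on 1 {0..} c"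
    and q_C0: "continuous_on {0..} q"
    and p_pos: "\<forall>t\<ge>0. p t > 0"
    and B1: "((\<lambda>t. ereal (d t)) \<longlongrightarrow> dinf) at_top"
    and B2: "\<exists>\<beta>>0. \<exists>\<gamma>>0. \<forall>t\<ge>0. cmod (b t) \<le> \<beta> * (\<bar>d t\<bar> + 1) \<and> cmod (c t) \<le> \<gamma> * (\<bar>d t\<bar> + 1)"
    and B3a: "\<exists>l::real. ereal l \<noteq> dinf \<and> (\<exists>tl\<ge>0. l \<notin> d ` {tl..} \<and>
                 bounded ((\<lambda>t. pi_f p b d t l) ` {tl..}))"
    and B3b: "\<forall>l::real. l \<notin> closure (Delta_f p b d ` {0..}) \<and> ereal l \<noteq> dinf \<longrightarrow>
                 (\<exists>tl\<ge>0. l \<notin> d ` {tl..} \<and>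
                   bounded ((\<lambda>t. rho_f p b c d t l) ` {tl..}) \<and>
                   bounded ((\<lambda>t. kappa_f b c d q t l) ` {tl..}) \<and>
                   bounded ((\<lambda>t. 1 / pi_f p b d t l) ` {tl..}))"
    and C: "\<forall>l::real. l \<notin> closure (Delta_f p b d ` {0..}) \<and> ereal l \<noteq> dinf \<longrightarrow>
                 (\<exists>L::complex. ((\<lambda>t. rho_f p b c d t l / complex_of_real (pi_f p b d t l)) \<longlongrightarrow> L) at_top) \<and>
                 (\<exists>L::complex. ((\<lambda>t. kappa_f b c d q t l / complex_of_real (pi_f p b d t l)) \<longlongrightarrow> L) at_top)"
  shows "\<forall>l::real. l \<notin> closure (Delta_f p b d ` {0..}) \<and> ereal l \<noteq> dinf \<longrightarrow>
           ((\<lambda>t. vector_derivative (\<lambda>s. pi_f p b d s l) (at t) / pi_f p b d t l) \<longlongrightarrow> 0) at_top \<and>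
           (\<exists>L::real. ((\<lambda>t. rho_f p b c d t l / complex_of_real (pi_f p b d t l)) \<longlongrightarrow> complex_of_real L) at_top) \<and>
           (\<exists>L::real. ((\<lambda>t. kappa_f b c d q t l / complex_of_real (pi_f p b d t l)) \<longlongrightarrow> complex_of_real L) at_top)"
  proof (intro allI impI)
  fix l :: real
  assume hl: "l \<notin> closure (Delta_f p b d ` {0..}) \<and> ereal l \<noteq> dinf"
  obtain tl where tl: "tl \<ge> 0" "l \<notin> d ` {tl..}"
      "bounded ((\<lambda>t. rho_f p b c d t l) ` {tl..})"
      "bounded ((\<lambda>t. 1 / pi_f p b d t l) ` {tl..})"
    using B3b hl by blast
  obtain Lr where Lr: "((\<lambda>t. rho_f p b c d t l / complex_of_real (pi_f p b d t l)) \<longlongrightarrow> Lr) at_top"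
    using C hl by blast
  obtain Lk where Lk: "((\<lambda>t. kappa_f b c d q t l / complex_of_real (pi_f p b d t l)) \<longlongrightarrow> Lk) at_top"
    using C hl by blast
  define T where "T = tl + 1"
  define P where "P = (\<lambda>s. pi_f p b d s l)"
  define P' where "P' = (\<lambda>t. vector_derivative P (at t))"
  define w where "w = (\<lambda>s. cnj (b s) * c s / complex_of_real (d s - l))"
  define W where "W = (\<lambda>t. vector_derivative w (at t))"
  have dl: "d t \<noteq> l" if "t \<ge> T" for t using tl(2) that by (auto simp: T_def)
  have tpos: "t > 0" if "t \<ge> T" for t using tl(1) that by (auto simp: T_def)
  have dp: "p differentiable (at t)" and dd: "d differentiable (at t)" and db: "b differentiable (at t)"
    and dc: "c differentiable (at t)" if "t \<ge> T" for t
    using Ck_diff[OF p_C2 _ tpos[OF that]] Ck_diff[OF d_C2 _ tpos[OF that]]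
      Ck_diff[OF b_C2 _ tpos[OF that]] Ck_diff[OF c_C1 _ tpos[OF that]] by auto
  have dRe: "(\<lambda>s. Re (b s)) differentiable (at t)" and dIm: "(\<lambda>s. Im (b s)) differentiable (at t)"
    if "t \<ge> T" for t
    using differentiable_compose[OF bounded_linear_imp_differentiable[OF bounded_linear_Re] db[OF that]]
      differentiable_compose[OF bounded_linear_imp_differentiable[OF bounded_linear_Im] db[OF that]]
    by auto
  have Peq: "P = (\<lambda>s. p s - ((Re (b s))\<^sup>2 + (Im (b s))\<^sup>2) / (d s - l))"
    by (auto simp: P_def pi_f_def cmod_power2)
  have dP: "\<forall>t\<ge>T. P differentiable (at t)"
  proof (intro allI impI)
    fix t assume t: "T \<le> t"
    have "(\<lambda>s. d s - l) differentiable (at t)" using dd[OF t] by simp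
    then show "P differentiable (at t)" unfolding Peq
      using dp[OF t] dd[OF t] dRe[OF t] dIm[OF t] dl[OF t]
      by (intro differentiable_diff differentiable_divide differentiable_add differentiable_power) auto
  qed
  have dw: "\<forall>t\<ge>T. w differentiable (at t)"
  proof (intro allI impI)
    fix t assume t: "T \<le> t"
    have "(\<lambda>s. d s - l) differentiable (at t)" using dd[OF t] by simp
    then have "(\<lambda>s. complex_of_real (d s - l)) differentiable (at t)"
      using differentiable_compose[OF bounded_linear_imp_differentiable[OF bounded_linear_of_real]] by blast
    moreover have "(\<lambda>s. cnj (b s)) differentiable (at t)" using db[OF t] by (simp add: differentiable_cnj_iff)
    ultimately show "w differentiable (at t)" unfolding w_def
      using dc[OF t] dl[OF t] by (intro differentiable_divide differentiable_mult) auto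
  qed
  obtain B where B: "\<forall>t\<ge>tl. \<bar>1 / P t\<bar> \<le> B"
    using tl(4) by (auto simp: bounded_iff P_def)
  obtain M where M: "\<forall>t\<ge>tl. cmod (rho_f p b c d t l) \<le> M"
    using tl(3) by (auto simp: bounded_iff)
  have BT: "\<forall>t\<ge>T. \<bar>1 / P t\<bar> \<le> B" using B by (auto simp: T_def)
  have rhoIm: "Im (rho_f p b c d t l) = P' t" for t
    by (simp add: rho_f_def P'_def P_def)
  have rhoRe: "Re (rho_f p b c d t l) = 2 * Im (w t)" for t
    by (simp add: rho_f_def w_def Im_divide_of_real)
  have kIm: "Im (kappa_f b c d q t l) = Im (W t)" for t
    by (simp add: kappa_f_def W_def w_def)
  have lim1: "((\<lambda>t. P' t / P t) \<longlongrightarrow> Im Lr) at_top"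
  proof -
    have "((\<lambda>t. Im (rho_f p b c d t l / complex_of_real (pi_f p b d t l))) \<longlongrightarrow> Im Lr) at_top"
      by (rule tendsto_Im[OF Lr])
    moreover have "(\<lambda>t. Im (rho_f p b c d t l / complex_of_real (pi_f p b d t l))) = (\<lambda>t. P' t / P t)"
      using rhoIm by (auto simp: Im_divide_of_real P_def)
    ultimately show ?thesis by simp
  qed
  have ImLr: "Im Lr = 0"
  proof (rule lim_zero[OF dP _ BT lim1])
    show "\<forall>t\<ge>T. (P has_real_derivative P' t) (at t)"
      using dP by (auto simp: P'_def has_real_derivative_iff_has_vector_derivative vector_derivative_works)
    have "\<forall>t\<ge>T. \<bar>P' t\<bar> \<le> M"
    proof (intro allI impI)
      fix t assume "T \<le> t"
      then have "cmod (rho_f p b c d t l) \<le> M" using M by (auto simp: T_def)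
      moreover have "\<bar>Im (rho_f p b c d t l)\<bar> \<le> cmod (rho_f p b c d t l)" by (rule abs_Im_le_cmod)
      ultimately show "\<bar>P' t\<bar> \<le> M" using rhoIm by simp
    qed
    then show "bounded (P ` {T..}) \<or> (P = P \<and> bounded (P' ` {T..}))"
      by (auto simp: bounded_iff)
  qed
  have lim2: "((\<lambda>t. Im (W t) / P t) \<longlongrightarrow> Im Lk) at_top"
  proof -
    have "((\<lambda>t. Im (kappa_f b c d q t l / complex_of_real (pi_f p b d t l))) \<longlongrightarrow> Im Lk) at_top"
      by (rule tendsto_Im[OF Lk])
    moreover have "(\<lambda>t. Im (kappa_f b c d q t l / complex_of_real (pi_f p b d t l))) = (\<lambda>t. Im (W t) / P t)"
      using kIm by (auto simp: Im_divide_of_real P_def)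
    ultimately show ?thesis by simp
  qed
  have ImLk: "Im Lk = 0"
  proof (rule lim_zero[OF dP _ BT lim2, of "\<lambda>s. Im (w s)"])
    show "\<forall>t\<ge>T. ((\<lambda>s. Im (w s)) has_real_derivative Im (W t)) (at t)"
      using dw by (auto simp: W_def vector_derivative_works intro!: has_field_derivative_Im)
    have "\<forall>t\<ge>T. \<bar>Im (w t)\<bar> \<le> M"
    proof (intro allI impI)
      fix t assume "T \<le> t"
      then have "cmod (rho_f p b c d t l) \<le> M" using M by (auto simp: T_def)
      moreover have "\<bar>Re (rho_f p b c d t l)\<bar> \<le> cmod (rho_f p b c d t l)" by (rule abs_Re_le_cmod)
      ultimately show "\<bar>Im (w t)\<bar> \<le> M" using rhoRe[of t] by simp
    qed
    then show "bounded ((\<lambda>s. Im (w s)) ` {T..}) \<or> ((\<lambda>s. Im (w s)) = P \<and> bounded ((\<lambda>t. Im (W t)) ` {T..}))"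
      by (auto simp: bounded_iff)
  qed
  have eqr: "Lr = complex_of_real (Re Lr)" using ImLr by (simp add: complex_eq_iff)
  have eqk: "Lk = complex_of_real (Re Lk)" using ImLk by (simp add: complex_eq_iff)
  show "((\<lambda>t. vector_derivative (\<lambda>s. pi_f p b d s l) (at t) / pi_f p b d t l) \<longlongrightarrow> 0) at_top \<and>
           (\<exists>L::real. ((\<lambda>t. rho_f p b c d t l / complex_of_real (pi_f p b d t l)) \<longlongrightarrow> complex_of_real L) at_top) \<and>
           (\<exists>L::real. ((\<lambda>t. kappa_f b c d q t l / complex_of_real (pi_f p b d t l)) \<longlongrightarrow> complex_of_real L) at_top)"
    using lim1 ImLr Lr Lk eqr eqk unfolding P'_def P_def by metis
qed

end
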